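(* There exists a sequence $f_{1,\infty}=(f_1,f_2,\dots)$ of surjective continuous maps from $I=[0,1]$ to itself (not converging uniformly) such that the nonautonomous system $(I,f_{1,\infty})$ has positive topological entropy, $h(f_{1,\infty})>0$, and is not Li–Yorke chaotic.
   Context: A nonautonomous dynamical system (NDS) $(X,f_{1,\infty})$ consists of a compact metric space $(X,\varrho)$ and a sequence $f_{1,\infty}=(f_n)_{n\ge1}$ of continuous maps $X\to X$, with iterates $f_1^0(x)=x$, $f_1^n=f_n\circ\dots\circ f_1$. Li–Yorke pair: distinct $x,y$ with $\limsup_{n}\varrho(f_1^n(x),f_1^n(y))>0$ and $\liminf_{n}\varrho(f_1^n(x),f_1^n(y))=0$; the NDS is Li–Yorke chaotic if $X$ contains an uncountable set any two distinct points of which form a Li–Yorke pair. Topological entropy: put $\varrho_n(x,y)=\max_{0\le j\le n-1}\varrho(f_1^{j}(x),f_1^{j}(y))$; $E$ is $(n,\varepsilon)$-separated if $\varrho_n(x,y)>\varepsilon$ for distinct $x,y\in E$; with $s_n(\varepsilon)$ the maximal cardinality of such a set, $h(f_{1,\infty})=\lim_{\varepsilon\to0}\limsup_{n\to\infty}\frac1n\log s_n(\varepsilon)$. *)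

theory Defs
  imports "HOL-Analysis.Analysis"
begin

text \<open>A nonautonomous system is given by a sequence f :: nat => 'a => 'a of maps;
  only f 1, f 2, ... are used (f 0 is ignored). nds_iter f n = f n o ... o f 1.\<close>

fun nds_iter :: "(nat \<Rightarrow> 'a \<Rightarrow> 'a) \<Rightarrow> nat \<Rightarrow> 'a \<Rightarrow> 'a" where
  "nds_iter f 0 x = x"
| "nds_iter f (Suc n) x = f (Suc n) (nds_iter f n x)"

definition li_yorke_pair :: "(nat \<Rightarrow> 'a::metric_space \<Rightarrow> 'a) \<Rightarrow> 'a \<Rightarrow> 'a \<Rightarrow> bool" where
  "li_yorke_pair f x y \<longleftrightarrow> x \<noteq> y \<and>
     limsup (\<lambda>n. ereal (dist (nds_iter f n x) (nds_iter f n y))) > 0 \<and>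
     liminf (\<lambda>n. ereal (dist (nds_iter f n x) (nds_iter f n y))) = 0"

definition li_yorke_chaotic :: "'a::metric_space set \<Rightarrow> (nat \<Rightarrow> 'a \<Rightarrow> 'a) \<Rightarrow> bool" where
  "li_yorke_chaotic X f \<longleftrightarrow>
     (\<exists>S. S \<subseteq> X \<and> uncountable S \<and>
        (\<forall>x\<in>S. \<forall>y\<in>S. x \<noteq> y \<longrightarrow> li_yorke_pair f x y))"

definition bowen_dist :: "(nat \<Rightarrow> 'a::metric_space \<Rightarrow> 'a) \<Rightarrow> nat \<Rightarrow> 'a \<Rightarrow> 'a \<Rightarrow> real" where
  "bowen_dist f n x y = Max (insert 0 ((\<lambda>j. dist (nds_iter f j x) (nds_iter f j y)) ` {..<n}))"

definition separated_set :: "'a::metric_space set \<Rightarrow> (nat \<Rightarrow> 'a \<Rightarrow> 'a) \<Rightarrow> nat \<Rightarrow> real \<Rightarrow> 'a set \<Rightarrow> bool" where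
  "separated_set X f n \<epsilon> E \<longleftrightarrow> E \<subseteq> X \<and>
     (\<forall>x\<in>E. \<forall>y\<in>E. x \<noteq> y \<longrightarrow> bowen_dist f n x y > \<epsilon>)"

text \<open>Maximal cardinality of an (n,eps)-separated set (finite on compact X).\<close>
definition sep_number :: "'a::metric_space set \<Rightarrow> (nat \<Rightarrow> 'a \<Rightarrow> 'a) \<Rightarrow> nat \<Rightarrow> real \<Rightarrow> nat" where
  "sep_number X f n \<epsilon> = Sup {card E | E. finite E \<and> separated_set X f n \<epsilon> E}"

definition nds_entropy :: "'a::metric_space set \<Rightarrow> (nat \<Rightarrow> 'a \<Rightarrow> 'a) \<Rightarrow> ereal" where
  "nds_entropy X f = Lim (at_right (0::real))
     (\<lambda>\<epsilon>. limsup (\<lambda>n. ereal (ln (real (sep_number X f n \<epsilon>)) / real n)))"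

end

theory Submission imports Defs begin

definition Sm :: "real \<Rightarrow> real" where
  "Sm u = 3 * u - 6 * max 0 (u - 1/3) + 6 * max 0 (u - 2/3)"
definition clampm :: "real \<Rightarrow> real" where "clampm u = max 0 (min 1 u)"
definition Am :: "real \<Rightarrow> real" where
  "Am v = v + (Sm (clampm (4 * v-1)) - clampm (4 * v-1)) / 4"
definition Bm :: "real \<Rightarrow> real" where "Bm v = min (2 * v) 1"
definition FF :: "nat \<Rightarrow> real \<Rightarrow> real" where
  "FF n = (if (\<exists>k. n = 2^k) then Bm else Am)"

lemma Sm_lip: "\<bar>Sm u - Sm u'\<bar> \<le> 15 * \<bar>u - u'\<bar>"
  unfolding Sm_def by (auto simp: max_def abs_if split: if_splits)

lemma clampm_lip: "\<bar>clampm u - clampm u'\<bar> \<le> \<bar>u - u'\<bar>"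
  unfolding clampm_def by (auto simp: max_def min_def abs_if split: if_splits)

lemma aux_lip: fixes a b x :: real
  shows "\<bar>b\<bar> \<le> 4*\<bar>x\<bar> \<Longrightarrow> \<bar>a\<bar> \<le> 15*\<bar>b\<bar> \<Longrightarrow> \<bar>x + (a - b)/4\<bar> \<le> 21*\<bar>x\<bar>"
proof -
  assume h1: "\<bar>b\<bar> \<le> 4*\<bar>x\<bar>" and h2: "\<bar>a\<bar> \<le> 15*\<bar>b\<bar>"
  have "\<bar>a\<bar> \<le> 60*\<bar>x\<bar>" using h1 h2 by linarith
  hence "\<bar>a - b\<bar> \<le> 64*\<bar>x\<bar>" using h1 abs_triangle_ineq4[of a b] by linarith
  hence "\<bar>(a - b)/4\<bar> \<le> 16*\<bar>x\<bar>" by simp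
  then show ?thesis using abs_triangle_ineq[of x "(a-b)/4"] by linarith
qed

lemma Am_lip: "\<bar>Am v - Am v'\<bar> \<le> 21 * \<bar>v - v'\<bar>"
proof -
  let ?c = "clampm (4 * v-1)" and ?d = "clampm (4 * v'-1)"
  have c: "\<bar>?c - ?d\<bar> \<le> 4*\<bar>v - v'\<bar>" using clampm_lip[of "4 * v-1" "4 * v'-1"] by (auto simp: abs_if split: if_splits)
  have s: "\<bar>Sm ?c - Sm ?d\<bar> \<le> 15*\<bar>?c - ?d\<bar>" by (rule Sm_lip)
  have e: "Am v - Am v' = (v - v') + ((Sm ?c - Sm ?d) - (?c - ?d))/4"
    unfolding Am_def by (simp add: field_simps)
  show ?thesis unfolding e using c s by (rule aux_lip)
qed

lemma Bm_lip: "\<bar>Bm v - Bm v'\<bar> \<le> 21 * \<bar>v - v'\<bar>"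
  unfolding Bm_def by (auto simp: min_def abs_if split: if_splits)

lemma Sm_01: "0 \<le> u \<Longrightarrow> u \<le> 1 \<Longrightarrow> 0 \<le> Sm u \<and> Sm u \<le> 1"
  unfolding Sm_def by (auto simp: max_def)

lemma Sm_low: "u \<le> 1/3 \<Longrightarrow> Sm u = 3 * u" unfolding Sm_def by (auto simp: max_def)
lemma Sm_high: "2/3 \<le> u \<Longrightarrow> Sm u = 3 * u - 2" unfolding Sm_def by (auto simp: max_def)

lemma Am_window: "0 \<le> u \<Longrightarrow> u \<le> 1 \<Longrightarrow> Am ((1+u)/4) = (1 + Sm u)/4"
  unfolding Am_def clampm_def by (auto simp: max_def min_def field_simps)

lemma Am_low: "v \<le> 1/4 \<Longrightarrow> Am v = v"
  unfolding Am_def clampm_def Sm_def by (auto simp: max_def min_def)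
lemma Am_high: "1/2 \<le> v \<Longrightarrow> Am v = v"
  unfolding Am_def clampm_def Sm_def by (auto simp: max_def min_def)

lemma Am_range: assumes "0 \<le> v" "v \<le> 1" shows "0 \<le> Am v \<and> Am v \<le> 1"
proof (cases "v \<le> 1/4 \<or> 1/2 \<le> v")
  case True then show ?thesis using assms Am_low Am_high by auto
next
  case False
  define u where "u = 4 * v - 1"
  have u: "0 \<le> u" "u \<le> 1" "v = (1+u)/4" using False by (auto simp: u_def)
  have "Am v = (1+Sm u)/4" by (subst u(3)) (rule Am_window[OF u(1,2)])
  then show ?thesis using Sm_01[OF u(1,2)] by auto
qed

lemma Am_surj: "Am ` {0..1} = {0..1}"
proof
  show "Am ` {0..1} \<subseteq> {0..1}" using Am_range by auto
  show "{0..1} \<subseteq> Am ` {0..1}"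
  proof
    fix y :: real assume y: "y \<in> {0..1}"
    show "y \<in> Am ` {0..1}"
    proof (cases "y \<le> 1/4 \<or> 1/2 \<le> y")
      case True then show ?thesis using y Am_low Am_high by (metis image_eqI)
    next
      case False
      define u where "u = (4 * y - 1)/3"
      have u: "0 \<le> u" "u \<le> 1/3" using False by (auto simp: u_def)
      have "Am ((1+u)/4) = (1 + Sm u)/4" by (rule Am_window) (use u in auto)
      also have "\<dots> = (1 + 3 * u)/4" using u Sm_low by simp
      also have "\<dots> = y" by (simp add: u_def field_simps)
      finally show ?thesis using u by (intro image_eqI[of _ _ "(1+u)/4"]) auto
    qed
  qed
qed

lemma Bm_surj: "Bm ` {0..1} = {0..1}"
proof
  show "Bm ` {0..1} \<subseteq> {0..1}" unfolding Bm_def by auto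
  show "{0..1} \<subseteq> Bm ` {0..1}"
  proof
    fix y :: real assume y: "y \<in> {0..1}"
    then have "Bm (y/2) = y" unfolding Bm_def by auto
    then show "y \<in> Bm ` {0..1}" using y by (intro image_eqI[of _ _ "y/2"]) auto
  qed
qed

lemma Am_cont: "continuous_on UNIV Am"
  unfolding Am_def Sm_def clampm_def by (intro continuous_intros) auto
lemma Bm_cont: "continuous_on UNIV Bm"
  unfolding Bm_def by (intro continuous_intros)

fun cant :: "bool list \<Rightarrow> real" where
  "cant [] = 0"
| "cant (a # w) = ((if a then 2 else 0) + cant w) / 3"

lemma cant_01: "0 \<le> cant w \<and> cant w \<le> 1"
  by (induction w) auto

lemma Sm_cant: "Sm (cant (a # w)) = cant w"
  using cant_01[of w] by (auto simp: Sm_low Sm_high field_simps)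

lemma Sm_iter_cant: "i \<le> length w \<Longrightarrow> (Sm ^^ i) (cant w) = cant (drop i w)"
proof (induction i arbitrary: w)
  case 0 then show ?case by simp
next
  case (Suc i)
  then obtain a w' where w: "w = a # w'" by (cases w) auto
  have "(Sm ^^ Suc i) (cant w) = (Sm ^^ i) (Sm (cant w))" by (simp only: funpow_Suc_right o_apply)
  also have "\<dots> = (Sm ^^ i) (cant w')" by (simp only: w Sm_cant)
  also have "\<dots> = cant (drop i w')" using Suc by (simp add: w)
  finally show ?case by (simp add: w)
qed

lemma cant_sep: "\<bar>cant (a # w) - cant (b # w')\<bar> \<ge> 1/3" if "a \<noteq> b"
  using that cant_01[of w] cant_01[of w'] by (cases a; cases b) (auto simp: field_simps)

lemma Am_iter_window: "0 \<le> u \<Longrightarrow> u \<le> 1 \<Longrightarrow> (Am ^^ i) ((1+u)/4) = (1 + (Sm ^^ i) u)/4"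
proof (induction i arbitrary: u)
  case 0 then show ?case by simp
next
  case (Suc i)
  have "(Am ^^ Suc i) ((1+u)/4) = (Am ^^ i) (Am ((1+u)/4))" by (simp only: funpow_Suc_right o_apply)
  also have "\<dots> = (Am ^^ i) ((1 + Sm u)/4)" using Am_window[OF Suc.prems] by (simp only:)
  also have "\<dots> = (1 + (Sm ^^ i) (Sm u))/4" using Suc.IH[of "Sm u"] Sm_01[OF Suc.prems] by simp
  finally show ?case by (simp only: funpow_Suc_right o_apply)
qed

lemma Am_iter_low: "v \<le> 1/4 \<Longrightarrow> (Am ^^ i) v = v"
  by (induction i) (auto simp: Am_low)
lemma Am_iter_high: "1/2 \<le> v \<Longrightarrow> (Am ^^ i) v = v"
  by (induction i) (auto simp: Am_high)

lemma Am_iter_ge: "0 \<le> v \<Longrightarrow> v \<le> 1 \<Longrightarrow> min v (1/4) \<le> (Am ^^ i) v \<and> (Am ^^ i) v \<le> 1"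
proof (cases "v \<le> 1/4 \<or> 1/2 \<le> v")
  case True
  assume "0 \<le> v" "v \<le> 1"
  then show ?thesis using True Am_iter_low Am_iter_high by auto
next
  case False
  assume "0 \<le> v" "v \<le> 1"
  define u where "u = 4 * v - 1"
  have u: "0 \<le> u" "u \<le> 1" "v = (1+u)/4" using False by (auto simp: u_def)
  have "0 \<le> (Sm ^^ i) u \<and> (Sm ^^ i) u \<le> 1"
    using u by (induction i) (auto simp: Sm_01)
  have "(Am ^^ i) v = (1 + (Sm ^^ i) u)/4" by (subst u(3)) (rule Am_iter_window[OF u(1,2)])
  then show ?thesis using \<open>0 \<le> (Sm ^^ i) u \<and> _\<close> by auto
qed

lemma FF_pow: "FF (2^k) = Bm" unfolding FF_def by auto

lemma FF_mid: assumes "2^k < n" "n < 2^(Suc k)" shows "FF n = Am"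
proof -
  have "\<not> (\<exists>b. n = 2^b)"
  proof
    assume "\<exists>b. n = 2^b" then obtain b where b: "n = 2^b" by auto
    have "k < b" using assms(1) b by (metis power_less_imp_less_exp one_less_numeral_iff semiring_norm(76))
    moreover have "b < Suc k" using assms(2) b by (metis power_less_imp_less_exp one_less_numeral_iff semiring_norm(76))
    ultimately show False by simp
  qed
  then show ?thesis unfolding FF_def by auto
qed

lemma nds_run: "(\<And>j. 1 \<le> j \<Longrightarrow> j \<le> i \<Longrightarrow> f (m + j) = g) \<Longrightarrow>
   nds_iter f (m + i) x = (g ^^ i) (nds_iter f m x)"
proof (induction i)
  case 0 then show ?case by simp
next
  case (Suc i)
  have "nds_iter f (m + Suc i) x = f (m + Suc i) (nds_iter f (m + i) x)" by simp
  also have "\<dots> = g ((g ^^ i) (nds_iter f m x))" using Suc.IH Suc.prems Suc.prems[of "Suc i"] by simp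
  finally show ?case by simp
qed

lemma FF_block: "i < 2^k \<Longrightarrow> nds_iter FF (2^k + i) x = (Am ^^ i) (nds_iter FF (2^k) x)"
  by (rule nds_run) (auto intro!: FF_mid[of k])

lemma FF_next: "nds_iter FF (2^Suc k) x = Bm ((Am ^^ (2^k - 1)) (nds_iter FF (2^k) x))"
proof -
  have e: "2^Suc k = Suc (2^k + (2^k - 1))" by simp
  have "nds_iter FF (2^Suc k) x = FF (2^Suc k) (nds_iter FF (2^k + (2^k - 1)) x)"
    using nds_iter.simps(2)[of FF "2^k + (2^k - 1)" x] unfolding e[symmetric] .
  also have "\<dots> = Bm ((Am ^^ (2^k - 1)) (nds_iter FF (2^k) x))"
    using FF_block[of "2^k - 1" k x] by (simp only: FF_pow) simp
  finally show ?thesis .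
qed

lemma FF_range: "0 \<le> x \<Longrightarrow> x \<le> 1 \<Longrightarrow> 0 \<le> FF n x \<and> FF n x \<le> 1"
  unfolding FF_def using Am_range[of x] by (auto simp: Bm_def)

lemma nds_range: "0 \<le> x \<Longrightarrow> x \<le> 1 \<Longrightarrow> 0 \<le> nds_iter FF n x \<and> nds_iter FF n x \<le> 1"
  by (induction n) (auto intro!: FF_range)

lemma FF_one: "FF n 1 = 1" unfolding FF_def by (auto simp: Bm_def Am_high)

lemma stay_one: "nds_iter FF m x = 1 \<Longrightarrow> nds_iter FF (m + i) x = 1"
  by (induction i) (auto simp: FF_one)

lemma absorb:
  assumes x: "0 < x" "x \<le> 1"
  shows "\<exists>N. \<forall>n\<ge>N. nds_iter FF n x = 1"
proof -
  define a where "a k = nds_iter FF (2^k) x" for k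
  have a01: "0 \<le> a k \<and> a k \<le> 1" for k unfolding a_def using nds_range x by auto
  have a0: "a 0 = min (2*x) 1" unfolding a_def by (simp add: FF_pow[of 0, simplified] Bm_def)
  have step: "a (Suc k) = Bm ((Am ^^ (2^k - 1)) (a k))" for k unfolding a_def by (rule FF_next)
  have grow: "a k \<ge> min (2^k * a 0) (1/2)" for k
  proof (induction k)
    case 0 then show ?case by simp
  next
    case (Suc k)
    have "(Am ^^ (2^k - 1)) (a k) \<ge> min (a k) (1/4)" using Am_iter_ge a01 by blast
    then have "a (Suc k) \<ge> min (2 * min (a k) (1/4)) 1" unfolding step Bm_def by auto
    then show ?case using Suc by (auto simp: min_def split: if_splits)
  qed
  have "a 0 > 0" using a0 x by auto
  then obtain k where k: "1 / (2 * a 0) < 2^k" using real_arch_pow[of 2 "1/(2 * a 0)"] by auto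
  then have "2^k * a 0 \<ge> 1/2" using \<open>a 0 > 0\<close> by (simp add: field_simps)
  then have "a k \<ge> 1/2" using grow[of k] by auto
  then have "a (Suc k) = 1" unfolding step using Am_iter_high a01[of k] by (simp add: Bm_def)
  then have "nds_iter FF (2^Suc k) x = 1" unfolding a_def .
  then show ?thesis using stay_one by (metis le_add_diff_inverse)
qed

lemma not_ly: "\<not> li_yorke_chaotic {0..1} FF"
proof
  assume "li_yorke_chaotic {0..1} FF"
  then obtain S where S: "S \<subseteq> {0..1}" "uncountable S"
    and ly: "\<forall>x\<in>S. \<forall>y\<in>S. x \<noteq> y \<longrightarrow> li_yorke_pair FF x y"
    unfolding li_yorke_chaotic_def by auto
  have "infinite S" using S(2) countable_finite by blast
  then have "infinite (S - {0})" by simp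
  then obtain x where x: "x \<in> S - {0}" by (metis finite.emptyI ex_in_conv)
  have "infinite (S - {0} - {x})" using \<open>infinite (S - {0})\<close> by simp
  then obtain y where y: "y \<in> S - {0} - {x}" by (metis finite.emptyI ex_in_conv)
  have xr: "0 < x" "x \<le> 1" using x S(1) by force+
  have yr: "0 < y" "y \<le> 1" using y S(1) by force+
  obtain N1 where N1: "\<forall>n\<ge>N1. nds_iter FF n x = 1" using absorb[OF xr] by auto
  obtain N2 where N2: "\<forall>n\<ge>N2. nds_iter FF n y = 1" using absorb[OF yr] by auto
  have ev: "eventually (\<lambda>n. ereal (dist (nds_iter FF n x) (nds_iter FF n y)) = 0) sequentially"
    unfolding eventually_sequentially using N1 N2 by (intro exI[of _ "max N1 N2"]) auto
  have "limsup (\<lambda>n. ereal (dist (nds_iter FF n x) (nds_iter FF n y))) = 0"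
    by (rule lim_imp_Limsup[OF trivial_limit_sequentially tendsto_eventually[OF ev]])
  moreover have "li_yorke_pair FF x y" using ly x y by auto
  ultimately show False unfolding li_yorke_pair_def by auto
qed

lemma FF_half: "FF n (1/2) = (if (\<exists>k. n = 2^k) then 1 else 1/2)"
  unfolding FF_def by (auto simp: Bm_def Am_high)

lemma not_unif: "\<not> (\<exists>g. uniform_limit {0..1} FF g sequentially)"
proof
  assume "\<exists>g. uniform_limit {0..1} FF g sequentially"
  then obtain g where "uniform_limit {0..1} FF g sequentially" by auto
  then have lim: "(\<lambda>n. FF n (1/2)) \<longlonglongrightarrow> g (1/2)"
    by (rule tendsto_uniform_limitI) auto
  then have "eventually (\<lambda>n. dist (FF n (1/2)) (g (1/2)) < 1/4) sequentially"
    by (rule tendstoD) simp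
  then obtain N where N: "\<And>n. n \<ge> N \<Longrightarrow> dist (FF n (1/2)) (g (1/2)) < 1/4"
    unfolding eventually_sequentially by auto
  define k where "k = Suc N"
  have "N \<le> 2^k" unfolding k_def by (metis Suc_leD less_exp less_imp_le_nat)
  have h1: "FF (2^k) (1/2) = 1" by (simp add: FF_half)
  have "(2::nat)^k < 2^k + 1" by simp
  have "(2::nat)^k + 1 < 2^Suc k" proof -
    have "(1::nat) < 2^k" using k_def by (intro one_less_power) auto
    then show ?thesis by simp
  qed
  note this \<open>(2::nat)^k < 2^k + 1\<close>
  then have h2: "FF (2^k + 1) (1/2) = 1/2" using FF_mid[of k "2^k+1"] by (simp add: Am_high)
  have "dist (FF (2^k) (1/2)) (g (1/2)) < 1/4" using N \<open>N \<le> 2^k\<close> by auto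
  moreover have "dist (FF (2^k+1) (1/2)) (g (1/2)) < 1/4" using N \<open>N \<le> 2^k\<close> by auto
  ultimately show False unfolding h1 h2 dist_real_def by auto
qed

lemma FF_lip: "\<bar>FF n x - FF n y\<bar> \<le> 21 * \<bar>x - y\<bar>"
  unfolding FF_def using Am_lip Bm_lip by auto

lemma nds_lip: "\<bar>nds_iter FF n x - nds_iter FF n y\<bar> \<le> 21^n * \<bar>x - y\<bar>"
proof (induction n)
  case 0 then show ?case by simp
next
  case (Suc n)
  have "\<bar>nds_iter FF (Suc n) x - nds_iter FF (Suc n) y\<bar> \<le> 21 * \<bar>nds_iter FF n x - nds_iter FF n y\<bar>"
    using FF_lip by simp
  also have "\<dots> \<le> 21 * (21^n * \<bar>x - y\<bar>)" using Suc by simp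
  finally show ?case by simp
qed

lemma bowen_le: "bowen_dist FF n x y \<le> 21^n * \<bar>x - y\<bar>"
  unfolding bowen_dist_def
proof (subst Max_le_iff, simp, simp, intro ballI)
  fix a assume "a \<in> insert 0 ((\<lambda>j. dist (nds_iter FF j x) (nds_iter FF j y)) ` {..<n})"
  then consider "a = 0" | j where "j < n" "a = dist (nds_iter FF j x) (nds_iter FF j y)" by auto
  then show "a \<le> 21^n * \<bar>x - y\<bar>"
  proof cases
    case 1 then show ?thesis by simp
  next
    case 2
    have "a \<le> 21^j * \<bar>x - y\<bar>" using 2 nds_lip by (simp add: dist_real_def)
    also have "\<dots> \<le> 21^n * \<bar>x - y\<bar>" using 2 by (intro mult_right_mono power_increasing) auto
    finally show ?thesis .
  qed
qed

lemma bowen_ge: "j < n \<Longrightarrow> dist (nds_iter f j x) (nds_iter f j y) \<le> bowen_dist f n x y"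
  unfolding bowen_dist_def by (intro Max_ge) auto

lemma sep_card_bound:
  assumes "\<epsilon> > 0" "finite E" "separated_set {0..1} FF n \<epsilon> E"
  shows "card E \<le> Suc (nat \<lfloor>21^n / \<epsilon>\<rfloor>)"
proof -
  define \<delta> where "\<delta> = \<epsilon> / 21^n"
  have dpos: "\<delta> > 0" using assms by (simp add: \<delta>_def)
  have sub: "E \<subseteq> {0..1}" and sep: "\<And>x y. x \<in> E \<Longrightarrow> y \<in> E \<Longrightarrow> x \<noteq> y \<Longrightarrow> bowen_dist FF n x y > \<epsilon>"
    using assms(3) unfolding separated_set_def by auto
  define g where "g x = nat \<lfloor>x / \<delta>\<rfloor>" for x
  have inj: "inj_on g E"
  proof (rule inj_onI, rule ccontr)
    fix x y assume xy: "x \<in> E" "y \<in> E" "g x = g y" "x \<noteq> y"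
    have "0 \<le> x / \<delta>" "0 \<le> y / \<delta>" using xy sub dpos by auto
    then have "\<lfloor>x / \<delta>\<rfloor> = \<lfloor>y / \<delta>\<rfloor>" using xy(3) unfolding g_def by (metis eq_nat_nat_iff zero_le_floor)
    then have "\<bar>x / \<delta> - y / \<delta>\<bar> < 1" by linarith
    then have "\<bar>x - y\<bar> < \<delta>" using dpos by (simp add: field_simps abs_less_iff)
    then have "21^n * \<bar>x - y\<bar> < \<epsilon>" using dpos unfolding \<delta>_def by (simp add: field_simps)
    moreover have "bowen_dist FF n x y > \<epsilon>" using sep xy by auto
    ultimately show False using bowen_le[of n x y] by linarith
  qed
  have img: "g ` E \<subseteq> {0..nat \<lfloor>21^n / \<epsilon>\<rfloor>}"
  proof
    fix z assume "z \<in> g ` E"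
    then obtain x where x: "x \<in> E" "z = g x" by auto
    have "x / \<delta> \<le> 1 / \<delta>" using x sub dpos by (auto simp: divide_right_mono)
    also have "1 / \<delta> = 21^n / \<epsilon>" by (simp add: \<delta>_def)
    finally show "z \<in> {0..nat \<lfloor>21^n / \<epsilon>\<rfloor>}" unfolding x g_def
      by (auto intro!: nat_mono floor_mono)
  qed
  have "card E = card (g ` E)" using inj by (simp add: card_image)
  also have "\<dots> \<le> card {0..nat \<lfloor>21^n / \<epsilon>\<rfloor>}" by (rule card_mono) (auto simp: img)
  finally show ?thesis by simp
qed

lemma sep_bdd: "\<epsilon> > 0 \<Longrightarrow> bdd_above {card E | E. finite E \<and> separated_set {0..1} FF n \<epsilon> E}"
  unfolding bdd_above_def using sep_card_bound by blast

lemma sep_ge_card: "\<epsilon> > 0 \<Longrightarrow> finite E \<Longrightarrow> separated_set {0..1} FF n \<epsilon> E \<Longrightarrow> card E \<le> sep_number {0..1} FF n \<epsilon>"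
  unfolding sep_number_def by (rule cSup_upper) (auto intro: sep_bdd)

lemma sep_ge1: "\<epsilon> > 0 \<Longrightarrow> 1 \<le> sep_number {0..1} FF n \<epsilon>"
  using sep_ge_card[of \<epsilon> "{0}" n] by (simp add: separated_set_def)

lemma sep_mono: "0 < \<epsilon>1 \<Longrightarrow> \<epsilon>1 \<le> \<epsilon>2 \<Longrightarrow> sep_number {0..1} FF n \<epsilon>2 \<le> sep_number {0..1} FF n \<epsilon>1"
  unfolding sep_number_def
proof (rule cSup_subset_mono)
  assume e: "0 < \<epsilon>1" "\<epsilon>1 \<le> \<epsilon>2"
  show "{card E |E. finite E \<and> separated_set {0..1} FF n \<epsilon>2 E} \<noteq> {}"
    by (auto simp: separated_set_def intro!: exI[of _ "{}"])
  show "bdd_above {card E |E. finite E \<and> separated_set {0..1} FF n \<epsilon>1 E}" using e by (intro sep_bdd) auto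
  show "{card E |E. finite E \<and> separated_set {0..1} FF n \<epsilon>2 E} \<subseteq> {card E |E. finite E \<and> separated_set {0..1} FF n \<epsilon>1 E}"
    using e unfolding separated_set_def by fastforce
qed

lemma small_orbit: "0 \<le> x \<Longrightarrow> 2^(Suc k) * x \<le> 1/2 \<Longrightarrow> nds_iter FF (2^k) x = 2^(Suc k) * x"
proof (induction k)
  case 0
  have "nds_iter FF (2^0) x = FF (2^0) x" by simp
  also have "\<dots> = Bm x" by (simp only: FF_pow)
  finally show ?case using 0 by (simp add: Bm_def)
next
  case (Suc k)
  have h: "2^(Suc k) * x \<le> 1/4" using Suc.prems by simp
  then have ih: "nds_iter FF (2^k) x = 2^(Suc k) * x" using Suc by simp
  have "nds_iter FF (2^Suc k) x = Bm ((Am ^^ (2^k - 1)) (2^(Suc k) * x))" using FF_next ih by simp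
  also have "\<dots> = Bm (2^(Suc k) * x)" using Am_iter_low h by simp
  also have "\<dots> = 2^(Suc (Suc k)) * x" using Suc.prems by (simp add: Bm_def)
  finally show ?case .
qed

definition xw :: "nat \<Rightarrow> bool list \<Rightarrow> real" where
  "xw k w = (1 + cant w) / 4 / 2^(Suc k)"

lemma xw_01: "0 \<le> xw k w \<and> xw k w \<le> 1"
proof -
  have "(1 + cant w) / 4 \<le> 1" using cant_01[of w] by auto
  moreover have "(1::real) \<le> 2^Suc k" by (rule one_le_power) simp
  ultimately have "(1 + cant w) / 4 / 2^(Suc k) \<le> 1"
    by (meson divide_le_eq_1 dual_order.trans less_eq_real_def zero_less_power zero_less_numeral)
  then show ?thesis unfolding xw_def using cant_01[of w] by auto
qed

lemma xw_orbit:
  assumes "i < 2^k" "length w = 2^k - 1"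
  shows "nds_iter FF (2^k + i) (xw k w) = (1 + cant (drop i w)) / 4"
proof -
  have c: "0 \<le> cant w" "cant w \<le> 1" using cant_01[of w] by auto
  have "nds_iter FF (2^k) (xw k w) = 2^(Suc k) * xw k w"
    by (rule small_orbit) (use c in \<open>auto simp: xw_def\<close>)
  also have "\<dots> = (1 + cant w) / 4" by (simp add: xw_def)
  finally have a: "nds_iter FF (2^k) (xw k w) = (1 + cant w) / 4" .
  have "nds_iter FF (2^k + i) (xw k w) = (Am ^^ i) ((1 + cant w) / 4)"
    using FF_block[OF assms(1), of "xw k w"] a by (simp only:)
  also have "\<dots> = (1 + (Sm ^^ i) (cant w)) / 4" using Am_iter_window c by simp
  also have "\<dots> = (1 + cant (drop i w)) / 4" using assms by (simp add: Sm_iter_cant)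
  finally show ?thesis .
qed

lemma xw_sep:
  assumes "length w1 = 2^k - 1" "length w2 = 2^k - 1" "w1 \<noteq> w2"
  shows "bowen_dist FF (2^Suc k) (xw k w1) (xw k w2) \<ge> 1/12"
proof -
  have "\<exists>i<2^k - 1. w1 ! i \<noteq> w2 ! i"
  proof (rule ccontr)
    assume "\<not> (\<exists>i<2^k - 1. w1 ! i \<noteq> w2 ! i)"
    then have "w1 = w2" using assms(1,2) by (intro nth_equalityI) auto
    then show False using assms(3) by simp
  qed
  then obtain i where i: "i < 2^k - 1" "w1 ! i \<noteq> w2 ! i" by auto
  have d1: "drop i w1 = (w1 ! i) # drop (Suc i) w1" using i(1) assms(1) by (intro Cons_nth_drop_Suc[symmetric]) simp
  have d2: "drop i w2 = (w2 ! i) # drop (Suc i) w2" using i(1) assms(2) by (intro Cons_nth_drop_Suc[symmetric]) simp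
  have ik: "i < 2^k" using i by simp
  have "1/12 \<le> \<bar>cant (drop i w1) - cant (drop i w2)\<bar> / 4"
    unfolding d1 d2 using cant_sep[OF i(2)] by simp
  also have "\<dots> = dist (nds_iter FF (2^k + i) (xw k w1)) (nds_iter FF (2^k + i) (xw k w2))"
    unfolding xw_orbit[OF ik assms(1)] xw_orbit[OF ik assms(2)] dist_real_def
    by (simp add: abs_minus_commute diff_divide_distrib[symmetric])
  also have "\<dots> \<le> bowen_dist FF (2^Suc k) (xw k w1) (xw k w2)"
    by (rule bowen_ge) (use ik in simp)
  finally show ?thesis .
qed

lemma sep_lower:
  assumes "1 \<le> k"
  shows "2^(2^k - 1) \<le> sep_number {0..1} FF (2^Suc k) (1/24)"
proof -
  define W where "W = {w :: bool list. length w = 2^k - 1}"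
  define E where "E = xw k ` W"
  have cW: "card W = 2^(2^k - 1)"
    using card_lists_length_eq[of "UNIV :: bool set" "2^k - 1"] unfolding W_def by simp
  have fW: "finite W" unfolding W_def using finite_lists_length_eq[of "UNIV :: bool set"] by simp
  have inj: "inj_on (xw k) W"
  proof (rule inj_onI, rule ccontr)
    fix w1 w2 assume h: "w1 \<in> W" "w2 \<in> W" "xw k w1 = xw k w2" "w1 \<noteq> w2"
    have "bowen_dist FF (2^Suc k) (xw k w1) (xw k w2) \<ge> 1/12" using xw_sep[of w1 k w2] h(1,2,4) unfolding W_def by auto
    moreover have "bowen_dist FF (2^Suc k) (xw k w1) (xw k w2) \<le> 0" using bowen_le[of "2^Suc k" "xw k w1" "xw k w2"] h(3) by simp
    ultimately show False by simp
  qed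
  have "separated_set {0..1} FF (2^Suc k) (1/24) E"
    unfolding separated_set_def E_def W_def using xw_01 xw_sep by fastforce
  then have "card E \<le> sep_number {0..1} FF (2^Suc k) (1/24)"
    using fW by (intro sep_ge_card) (auto simp: E_def)
  moreover have "card E = 2^(2^k - 1)" unfolding E_def using inj cW by (simp add: card_image)
  ultimately show ?thesis by simp
qed

definition Fe :: "real \<Rightarrow> ereal" where
  "Fe \<epsilon> = limsup (\<lambda>n. ereal (ln (real (sep_number {0..1} FF n \<epsilon>)) / real n))"

lemma Fe_mono: assumes "0 < \<epsilon>1" "\<epsilon>1 \<le> \<epsilon>2" shows "Fe \<epsilon>2 \<le> Fe \<epsilon>1"
  unfolding Fe_def
proof (rule Limsup_mono, rule always_eventually, rule allI)
  fix n
  have "0 < real (sep_number {0..1} FF n \<epsilon>2)" using sep_ge1[of \<epsilon>2 n] assms by simp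
  moreover have "real (sep_number {0..1} FF n \<epsilon>2) \<le> real (sep_number {0..1} FF n \<epsilon>1)"
    using sep_mono[OF assms] by simp
  ultimately have "ln (real (sep_number {0..1} FF n \<epsilon>2)) \<le> ln (real (sep_number {0..1} FF n \<epsilon>1))"
    by simp
  then show "ereal (ln (real (sep_number {0..1} FF n \<epsilon>2)) / real n) \<le> ereal (ln (real (sep_number {0..1} FF n \<epsilon>1)) / real n)"
    by (simp add: divide_right_mono)
qed

lemma ratio_bound:
  assumes "1 \<le> k"
  shows "ln 2 / 4 \<le> ln (real (sep_number {0..1} FF (2^Suc k) (1/24))) / real (2^Suc k :: nat)"
proof -
  have s: "(2::real)^(2^k - 1) \<le> real (sep_number {0..1} FF (2^Suc k) (1/24))"
    using sep_lower[OF assms] by (metis numeral_power_le_of_nat_cancel_iff)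
  have "ln ((2::real)^(2^k - 1)) \<le> ln (real (sep_number {0..1} FF (2^Suc k) (1/24)))"
    using s sep_ge1[of "1/24" "2^Suc k"] by (subst ln_le_cancel_iff) auto
  then have l: "real (2^k - 1) * ln 2 \<le> ln (real (sep_number {0..1} FF (2^Suc k) (1/24)))"
    by (simp add: ln_realpow)
  have k2: "(2::nat) \<le> 2^k" using power_increasing[of 1 k "2::nat"] assms by simp
  have "real (2^Suc k :: nat) \<le> 4 * real (2^k - 1 :: nat)" using k2 power_increasing[of 1 k "2::real"] assms by (simp add: of_nat_diff)
  then have "ln 2 / 4 * real (2^Suc k :: nat) \<le> ln 2 / 4 * (4 * real (2^k - 1 :: nat))"
    by (intro mult_left_mono) auto
  also have "\<dots> = real (2^k - 1) * ln 2" by simp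
  also note l
  finally have *: "ln 2 / 4 * real (2^Suc k :: nat) \<le> ln (real (sep_number {0..1} FF (2^Suc k) (1/24)))" .
  have "0 < real (2^Suc k :: nat)" by simp
  then show ?thesis using * by (simp add: pos_le_divide_eq)
qed

lemma Fe_pos: "ereal (ln 2 / 4) \<le> Fe (1/24)"
  unfolding Fe_def limsup_INF_SUP
proof (rule INF_greatest)
  fix N :: nat
  define k where "k = Suc N"
  have N: "N \<le> 2^Suc k" unfolding k_def
    by (metis Suc_leD le_SucI less_exp less_imp_le_nat)
  have "ereal (ln 2 / 4) \<le> ereal (ln (real (sep_number {0..1} FF (2^Suc k) (1/24))) / real (2^Suc k :: nat))"
    using ratio_bound[of k] k_def by simp
  then show "ereal (ln 2 / 4) \<le> (SUP m\<in>{N..}. ereal (ln (real (sep_number {0..1} FF m (1/24))) / real m))"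
    using N by (intro SUP_upper2[of "2^Suc k"]) auto
qed

lemma entropy_pos: "nds_entropy {0..1} FF > 0"
proof -
  define M where "M = (SUP \<epsilon>\<in>{0<..}. Fe \<epsilon>)"
  have lim: "(Fe \<longlongrightarrow> M) (at_right 0)"
  proof (rule order_tendstoI)
    fix a assume "a < M"
    then obtain e0 where e0: "e0 \<in> {0<..}" "a < Fe e0" unfolding M_def by (auto simp: less_SUP_iff)
    show "eventually (\<lambda>e. a < Fe e) (at_right 0)"
      unfolding eventually_at_right_field
    proof (intro exI[of _ e0] conjI allI impI)
      show "0 < e0" using e0 by auto
      fix e :: real assume "0 < e" "e < e0"
      then have "Fe e0 \<le> Fe e" using Fe_mono by auto
      then show "a < Fe e" using e0 by auto
    qed
  next
    fix a assume "M < a"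
    show "eventually (\<lambda>e. Fe e < a) (at_right 0)"
      using eventually_at_right_less[of "0::real"]
    proof (rule eventually_mono)
      fix e :: real assume "0 < e"
      then have "Fe e \<le> M" unfolding M_def by (intro SUP_upper) auto
      then show "Fe e < a" using \<open>M < a\<close> by auto
    qed
  qed
  have "nds_entropy {0..1} FF = M"
    unfolding nds_entropy_def Fe_def[symmetric] using lim by (intro tendsto_Lim) auto
  moreover have "Fe (1/24) \<le> M" unfolding M_def by (intro SUP_upper) auto
  moreover have "(0::ereal) < ereal (ln 2 / 4)" by simp
  ultimately show ?thesis using Fe_pos by (meson less_le_trans)
qed

theorem mainTheorem2:
  shows "\<exists>f :: nat \<Rightarrow> real \<Rightarrow> real.
    (\<forall>n\<ge>1. continuous_on {0..1} (f n) \<and> f n ` {0..1} = {0..1}) \<and>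
    \<not> (\<exists>g. uniform_limit {0..1} f g sequentially) \<and>
    nds_entropy {0..1} f > 0 \<and>
    \<not> li_yorke_chaotic {0..1} f"
proof (intro exI[of _ FF] conjI allI impI)
  fix n :: nat
  show "continuous_on {0..1} (FF n)"
    unfolding FF_def using Am_cont Bm_cont by (auto intro: continuous_on_subset)
  show "FF n ` {0..1} = {0..1}" unfolding FF_def using Am_surj Bm_surj by auto
qed (use not_unif entropy_pos not_ly in auto)

end
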